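(* Consider coordination games in which every player has strategy set $\{1,2\}$, with solution set $\mathrm{NE}$ (pure Nash equilibria). (1) If $G$ is a cycle on $n\ge4$ nodes, then $ST(\mathrm{NE})\setminus\mathrm{NE}\neq\emptyset$; moreover, if $n$ is even, there is $s\in ST(\mathrm{NE})\setminus\mathrm{NE}$ with $\mathrm{sw}(s)=|E|-|N|\,(=0)$. (2) If $G$ is the complete graph on $n$ nodes, then $ST(\mathrm{NE})\setminus\mathrm{NE}\neq\emptyset$ if and only if $n$ is even. (3) If $G$ is a forest with at least one edge, then $ST(\mathrm{NE})\setminus\mathrm{NE}\neq\emptyset$.
   Context: The coordination game on a finite simple undirected graph $G=(N,E)$: players are nodes, each chooses $s_i\in\{1,2\}$, and $u_i(s)$ is the number of neighbours $j$ of $i$ with $s_j=s_i$; $\mathrm{sw}(s)=\sum_iu_i(s)$. For a solution set $D$, a transition is a profile $t$ such that for each $i$ there is $d\in D$ with $t_i=d_i$. $\mathrm{BR}_i(s_{-i})$ is the set of best responses of $i$. A stable transition is a transition $s$ such that for every $i$ with $s_i\notin\mathrm{BR}_i(s_{-i})$ there is $j\neq i$ with $s_j\notin\mathrm{BR}_j(s_{-j})$ and some $\hat s_j\in\mathrm{BR}_j(s_{-j})$ with $s_i\in\mathrm{BR}_i(\hat s_j,s_{-\{i,j\}})$; $ST(D)$ denotes the set of stable transitions. *)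

theory Defs
  imports Main "HOL-Library.FuncSet"
begin

text \<open>Coordination game on a finite simple undirected graph with vertex set V and
adjacency relation E. Strategies are 1 and 2; a profile assigns a strategy to
every node of V (and is undefined outside V).\<close>

definition simple_graph :: "'a set \<Rightarrow> ('a \<Rightarrow> 'a \<Rightarrow> bool) \<Rightarrow> bool" where
  "simple_graph V E \<longleftrightarrow> finite V \<and> (\<forall>i j. E i j \<longrightarrow> i \<in> V \<and> j \<in> V)
     \<and> (\<forall>i j. E i j \<longrightarrow> E j i) \<and> (\<forall>i. \<not> E i i)"

definition edges :: "'a set \<Rightarrow> ('a \<Rightarrow> 'a \<Rightarrow> bool) \<Rightarrow> 'a set set" where
  "edges V E = {{i, j} | i j. i \<in> V \<and> j \<in> V \<and> E i j}"

definition profiles :: "'a set \<Rightarrow> ('a \<Rightarrow> nat) set" where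
  "profiles V = V \<rightarrow>\<^sub>E {1, 2}"

definition util :: "'a set \<Rightarrow> ('a \<Rightarrow> 'a \<Rightarrow> bool) \<Rightarrow> 'a \<Rightarrow> ('a \<Rightarrow> nat) \<Rightarrow> nat" where
  "util V E i s = card {j \<in> V. E i j \<and> s j = s i}"

definition sw :: "'a set \<Rightarrow> ('a \<Rightarrow> 'a \<Rightarrow> bool) \<Rightarrow> ('a \<Rightarrow> nat) \<Rightarrow> nat" where
  "sw V E s = (\<Sum>i\<in>V. util V E i s)"

text \<open>Best responses of i to s_{-i} (the value s i is irrelevant).\<close>
definition BR :: "'a set \<Rightarrow> ('a \<Rightarrow> 'a \<Rightarrow> bool) \<Rightarrow> 'a \<Rightarrow> ('a \<Rightarrow> nat) \<Rightarrow> nat set" where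
  "BR V E i s = {x \<in> {1, 2}. \<forall>y \<in> {1, 2}. util V E i (s(i := y)) \<le> util V E i (s(i := x))}"

definition NE :: "'a set \<Rightarrow> ('a \<Rightarrow> 'a \<Rightarrow> bool) \<Rightarrow> ('a \<Rightarrow> nat) set" where
  "NE V E = {s \<in> profiles V. \<forall>i \<in> V. s i \<in> BR V E i s}"

definition is_transition :: "'a set \<Rightarrow> ('a \<Rightarrow> nat) set \<Rightarrow> ('a \<Rightarrow> nat) \<Rightarrow> bool" where
  "is_transition V D t \<longleftrightarrow> t \<in> profiles V \<and> (\<forall>i \<in> V. \<exists>d \<in> D. t i = d i)"

definition ST :: "'a set \<Rightarrow> ('a \<Rightarrow> 'a \<Rightarrow> bool) \<Rightarrow> ('a \<Rightarrow> nat) set \<Rightarrow> ('a \<Rightarrow> nat) set" where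
  "ST V E D = {s. is_transition V D s \<and>
     (\<forall>i \<in> V. s i \<notin> BR V E i s \<longrightarrow>
        (\<exists>j \<in> V. j \<noteq> i \<and> s j \<notin> BR V E j s \<and>
           (\<exists>x \<in> BR V E j s. s i \<in> BR V E i (s(j := x)))))}"

definition cycle_adj :: "nat \<Rightarrow> nat \<Rightarrow> nat \<Rightarrow> bool" where
  "cycle_adj n i j \<longleftrightarrow> i < n \<and> j < n \<and> (j = (i + 1) mod n \<or> i = (j + 1) mod n)"

definition complete_adj :: "nat \<Rightarrow> nat \<Rightarrow> nat \<Rightarrow> bool" where
  "complete_adj n i j \<longleftrightarrow> i < n \<and> j < n \<and> i \<noteq> j"

definition has_cycle :: "'a set \<Rightarrow> ('a \<Rightarrow> 'a \<Rightarrow> bool) \<Rightarrow> bool" where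
  "has_cycle V E \<longleftrightarrow> (\<exists>vs. length vs \<ge> 3 \<and> distinct vs \<and> set vs \<subseteq> V \<and>
      (\<forall>k < length vs. E (vs ! k) (vs ! ((k + 1) mod length vs))))"

definition forest :: "'a set \<Rightarrow> ('a \<Rightarrow> 'a \<Rightarrow> bool) \<Rightarrow> bool" where
  "forest V E \<longleftrightarrow> simple_graph V E \<and> \<not> has_cycle V E"

end

theory Submission
  imports Defs
begin


definition cnt :: "'a set \<Rightarrow> ('a \<Rightarrow> 'a \<Rightarrow> bool) \<Rightarrow> ('a \<Rightarrow> nat) \<Rightarrow> 'a \<Rightarrow> nat \<Rightarrow> nat" where
  "cnt V E s i y = card {j \<in> V. E i j \<and> s j = y}"

definition unh :: "'a set \<Rightarrow> ('a \<Rightarrow> 'a \<Rightarrow> bool) \<Rightarrow> ('a \<Rightarrow> nat) \<Rightarrow> 'a \<Rightarrow> bool" where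
  "unh V E s i \<longleftrightarrow> cnt V E s i (s i) < cnt V E s i (3 - s i)"

lemma util_upd: "\<not> E i i \<Longrightarrow> util V E i (s(i := y)) = cnt V E s i y"
  unfolding util_def cnt_def
  by (rule arg_cong[where f=card]) auto

lemma in_BR:
  assumes "\<not> E i i" "a \<in> {1,2}"
  shows "a \<in> BR V E i t \<longleftrightarrow> cnt V E t i (3 - a) \<le> cnt V E t i a"
proof -
  have "{1,2} = {a, 3 - a::nat}" using assms(2) by auto
  then show ?thesis using assms unfolding BR_def by (auto simp: util_upd)
qed

lemma BR_sub: "BR V E i t \<subseteq> {1,2}" unfolding BR_def by auto

lemma not_BR_iff:
  assumes "\<not> E i i" "s i \<in> {1,2}"
  shows "s i \<notin> BR V E i s \<longleftrightarrow> unh V E s i"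
  using in_BR[where E=E and i=i and a="s i" and V=V and t=s, OF assms] unfolding unh_def by auto

lemma BR_unh:
  assumes "\<not> E i i" "s i \<in> {1,2}" "unh V E s i"
  shows "BR V E i s = {3 - s i}"
proof -
  have a: "3 - s i \<in> {1,2}" using assms(2) by auto
  have "3 - s i \<in> BR V E i s" using in_BR[where E=E and i=i and a="3 - s i" and V=V and t=s, OF assms(1) a] assms(2,3)
    unfolding unh_def by auto
  moreover have "s i \<notin> BR V E i s" using not_BR_iff[where E=E and i=i and s=s and V=V, OF assms(1,2)] assms(3) by auto
  moreover have "BR V E i s \<subseteq> {s i, 3 - s i}" using BR_sub assms(2) by fastforce
  ultimately show ?thesis by auto
qed

lemma cnt_upd:
  assumes "finite V" "j \<in> V" "E i j"
  shows "cnt V E (s(j := z)) i w + (if s j = w then 1 else 0)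
       = cnt V E s i w + (if z = w then 1 else 0)"
proof -
  let ?S = "{k \<in> V. E i k \<and> k \<noteq> j \<and> s k = w}"
  have f: "finite ?S" using assms(1) by auto
  have j: "j \<notin> ?S" by auto
  have 1: "{k \<in> V. E i k \<and> (s(j := z)) k = w} = (if z = w then insert j ?S else ?S)"
    using assms by auto
  have 2: "{k \<in> V. E i k \<and> s k = w} = (if s j = w then insert j ?S else ?S)"
    using assms by auto
  show ?thesis unfolding cnt_def 1 2 using f j by (simp add: card_insert_if)
qed

lemma cnt_upd_nonadj: "\<not> E i j \<Longrightarrow> cnt V E (s(j := z)) i w = cnt V E s i w"
  unfolding cnt_def by (rule arg_cong[where f=card]) auto

lemma prof_val: "s \<in> profiles V \<Longrightarrow> i \<in> V \<Longrightarrow> s i \<in> {1,2}"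
  unfolding profiles_def by auto

lemma const_NE:
  assumes "simple_graph V E" "a \<in> {1,2}"
  shows "restrict (\<lambda>_. a) V \<in> NE V E"
proof -
  have "\<forall>i\<in>V. restrict (\<lambda>_. a) V i \<in> BR V E i (restrict (\<lambda>_. a) V)"
  proof
    fix i assume i: "i \<in> V"
    have ni: "\<not> E i i" using assms(1) unfolding simple_graph_def by auto
    have "cnt V E (restrict (\<lambda>_. a) V) i (3 - a) = 0"
      unfolding cnt_def using assms(2) by auto
    then show "restrict (\<lambda>_. a) V i \<in> BR V E i (restrict (\<lambda>_. a) V)"
      using in_BR[where E=E and i=i and a=a and V=V and t="restrict (\<lambda>_. a) V", OF ni assms(2)] i by simp
  qed
  moreover have "restrict (\<lambda>_. a) V \<in> profiles V" unfolding profiles_def using assms(2) by auto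
  ultimately show ?thesis unfolding NE_def by auto
qed

lemma trans_NE:
  assumes "simple_graph V E" "s \<in> profiles V"
  shows "is_transition V (NE V E) s"
  unfolding is_transition_def
proof (intro conjI ballI)
  show "s \<in> profiles V" by fact
  fix i assume "i \<in> V"
  then have "s i \<in> {1,2}" using prof_val[OF assms(2)] by auto
  then show "\<exists>d\<in>NE V E. s i = d i"
    using const_NE[OF assms(1), of "s i"] \<open>i \<in> V\<close> by (intro bexI[of _ "restrict (\<lambda>_. s i) V"]) auto
qed

lemma ST_suff:
  assumes g: "simple_graph V E" and s: "s \<in> profiles V"
    and h: "\<forall>i\<in>V. unh V E s i \<longrightarrow> (\<exists>j\<in>V. E i j \<and> s j \<noteq> s i \<and> unh V E s j \<and>
             cnt V E s i (3 - s i) \<le> cnt V E s i (s i) + 2)"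
  shows "s \<in> ST V E (NE V E)"
  unfolding ST_def
proof (intro CollectI conjI ballI impI)
  show "is_transition V (NE V E) s" using trans_NE[OF g s] .
  fix i assume i: "i \<in> V" and nb: "s i \<notin> BR V E i s"
  have irr: "\<And>k. \<not> E k k" and fin: "finite V" using g unfolding simple_graph_def by auto
  have si: "s i \<in> {1,2}" using prof_val[OF s i] .
  have ui: "unh V E s i" using not_BR_iff[where E=E and i=i and s=s and V=V, OF irr si] nb by auto
  then obtain j where j: "j \<in> V" "E i j" "s j \<noteq> s i" "unh V E s j"
     and m: "cnt V E s i (3 - s i) \<le> cnt V E s i (s i) + 2" using h i by blast
  have sj: "s j \<in> {1,2}" using prof_val[OF s j(1)] .
  have ji: "j \<noteq> i" using j(2) irr by auto
  have x: "3 - s j = s i" using si sj j(3) by auto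
  have bj: "BR V E j s = {3 - s j}" using BR_unh[where E=E and i=j and s=s and V=V, OF irr sj j(4)] .
  have c1: "cnt V E (s(j := s i)) i (s i) = cnt V E s i (s i) + 1"
    using cnt_upd[where E=E and i=i and j=j and V=V, OF fin j(1) j(2), of s "s i" "s i"] j(3) by simp
  have c2: "cnt V E (s(j := s i)) i (3 - s i) + 1 = cnt V E s i (3 - s i)"
    using cnt_upd[where E=E and i=i and j=j and V=V, OF fin j(1) j(2), of s "s i" "3 - s i"] j(3) si sj by auto
  have "s i \<in> BR V E i (s(j := s i))"
    using in_BR[where E=E and i=i and a="s i" and V=V and t="s(j := s i)", OF irr si] c1 c2 m by simp
  then show "\<exists>j\<in>V. j \<noteq> i \<and> s j \<notin> BR V E j s \<and> (\<exists>x\<in>BR V E j s. s i \<in> BR V E i (s(j := x)))"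
    using j ji bj x by (intro bexI[of _ j]) auto
qed

lemma notNE:
  assumes "simple_graph V E" "i \<in> V" "unh V E s i" "s \<in> profiles V"
  shows "s \<notin> NE V E"
proof
  assume "s \<in> NE V E"
  then have "s i \<in> BR V E i s" using assms(2) unfolding NE_def by auto
  moreover have "\<not> E i i" using assms(1) unfolding simple_graph_def by auto
  ultimately show False using not_BR_iff[where E=E and i=i and s=s and V=V] prof_val[OF assms(4,2)] assms(3) by metis
qed

lemma ST_nec:
  assumes g: "simple_graph V E" and st: "s \<in> ST V E (NE V E)" and i: "i \<in> V" and ui: "unh V E s i"
  shows "\<exists>j\<in>V. j \<noteq> i \<and> unh V E s j \<and> s j \<noteq> s i \<and> E i j"
proof -
  have irr: "\<And>k. \<not> E k k" and fin: "finite V" using g unfolding simple_graph_def by auto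
  have s: "s \<in> profiles V" using st unfolding ST_def is_transition_def by auto
  have si: "s i \<in> {1,2}" using prof_val[OF s i] .
  have "s i \<notin> BR V E i s" using not_BR_iff[where E=E and i=i and s=s and V=V, OF irr si] ui by auto
  then obtain j x where j: "j \<in> V" "j \<noteq> i" "s j \<notin> BR V E j s" "x \<in> BR V E j s"
      "s i \<in> BR V E i (s(j := x))"
    using st i unfolding ST_def by blast
  have sj: "s j \<in> {1,2}" using prof_val[OF s j(1)] .
  have uj: "unh V E s j" using not_BR_iff[where E=E and i=j and s=s and V=V, OF irr sj] j(3) by auto
  have x: "x = 3 - s j" using BR_unh[where E=E and i=j and s=s and V=V, OF irr sj uj] j(4) by auto
  have b: "cnt V E (s(j := x)) i (3 - s i) \<le> cnt V E (s(j := x)) i (s i)"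
    using in_BR[where E=E and i=i and a="s i" and V=V and t="s(j:=x)", OF irr si] j(5) by auto
  have adj: "E i j"
  proof (rule ccontr)
    assume "\<not> E i j"
    then show False using b cnt_upd_nonadj[of E i j V s x] ui unfolding unh_def by simp
  qed
  have ne: "s j \<noteq> s i"
  proof
    assume eq: "s j = s i"
    have c1: "cnt V E (s(j := x)) i (s i) + 1 = cnt V E s i (s i)"
      using cnt_upd[where E=E and i=i and j=j and V=V, OF fin j(1) adj, of s x "s i"] eq x si by auto
    have c2: "cnt V E (s(j := x)) i (3 - s i) = cnt V E s i (3 - s i) + 1"
      using cnt_upd[where E=E and i=i and j=j and V=V, OF fin j(1) adj, of s x "3 - s i"] eq x si by auto
    show False using b c1 c2 ui unfolding unh_def by simp
  qed
  show ?thesis using j(1,2) uj ne adj by blast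
qed



lemma complete_simple: "simple_graph {..<n} (complete_adj n)"
  unfolding simple_graph_def complete_adj_def by auto

lemma cnt_complete:
  assumes "i < n"
  shows "cnt {..<n} (complete_adj n) s i y = card {k\<in>{..<n}. s k = y} - (if s i = y then 1 else 0)"
proof -
  have "{j \<in> {..<n}. complete_adj n i j \<and> s j = y} = {k\<in>{..<n}. s k = y} - {i}"
    unfolding complete_adj_def using assms by auto
  then show ?thesis unfolding cnt_def using assms by (auto simp: card_Diff_singleton_if)
qed

lemma card_split:
  assumes "s \<in> profiles {..<n}" "a \<in> {1,2::nat}"
  shows "card {k\<in>{..<n}. s k = a} + card {k\<in>{..<n}. s k = 3 - a} = n"
proof -
  have "{k\<in>{..<n}. s k = a} \<union> {k\<in>{..<n}. s k = 3 - a} = {..<n}"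
    using assms prof_val[OF assms(1)] by fastforce
  moreover have "{k\<in>{..<n}. s k = a} \<inter> {k\<in>{..<n}. s k = 3 - a} = {}" using assms(2) by auto
  ultimately show ?thesis using card_Un_disjoint[of "{k\<in>{..<n}. s k = a}" "{k\<in>{..<n}. s k = 3 - a}"]
    by simp
qed

lemma complete_odd:
  assumes "odd n" "s \<in> ST {..<n} (complete_adj n) (NE {..<n} (complete_adj n))"
    "s \<notin> NE {..<n} (complete_adj n)"
  shows False
proof -
  have s: "s \<in> profiles {..<n}" using assms(2) unfolding ST_def is_transition_def by auto
  obtain i where i: "i < n" "s i \<notin> BR {..<n} (complete_adj n) i s"
    using assms(3) s unfolding NE_def by auto
  have si: "s i \<in> {1,2}" using prof_val[OF s] i by auto
  have ui: "unh {..<n} (complete_adj n) s i"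
    using not_BR_iff[where E="complete_adj n" and i=i and s=s and V="{..<n}"] i si
    unfolding complete_adj_def by auto
  obtain j where j: "j < n" "unh {..<n} (complete_adj n) s j" "s j \<noteq> s i"
    using ST_nec[OF complete_simple assms(2) _ ui] i by auto
  have sj: "s j \<in> {1,2}" using prof_val[OF s] j by auto
  have sj3: "s j = 3 - s i" "3 - s j = s i" using si sj j(3) by auto
  define a where "a = card {k\<in>{..<n}. s k = s i}"
  define b where "b = card {k\<in>{..<n}. s k = 3 - s i}"
  have ab: "a + b = n" using card_split[OF s si] unfolding a_def b_def .
  have a1: "a \<ge> 1" unfolding a_def using i card_gt_0_iff[of "{k\<in>{..<n}. s k = s i}"]
    by fastforce
  have b1: "b \<ge> 1" unfolding b_def using j sj3 card_gt_0_iff[of "{k\<in>{..<n}. s k = 3 - s i}"]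
    by fastforce
  have "a - 1 < b" using ui cnt_complete[OF i(1), of s] si unfolding unh_def a_def b_def by auto
  moreover have "b - 1 < a" using j(2) cnt_complete[OF j(1), of s] sj3 si
    unfolding unh_def a_def b_def by auto
  ultimately have "a = b" using a1 b1 by linarith
  then show False using ab assms(1) by auto
qed

lemma complete_even:
  assumes "even n" "n \<ge> 1"
  shows "ST {..<n} (complete_adj n) (NE {..<n} (complete_adj n)) - NE {..<n} (complete_adj n) \<noteq> {}"
proof -
  define h where "h = n div 2"
  have n: "n = 2 * h" "h \<ge> 1" using assms unfolding h_def by auto
  define s where "s = ((\<lambda>k. if k < n then (if k < h then 1 else 2) else undefined) :: nat \<Rightarrow> nat)"
  have s: "s \<in> profiles {..<n}" unfolding profiles_def PiE_def extensional_def s_def by auto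
  have c1: "card {k\<in>{..<n}. s k = 1} = h"
  proof -
    have "{k\<in>{..<n}. s k = 1} = {..<h}" unfolding s_def using n by auto
    then show ?thesis by simp
  qed
  have c2: "card {k\<in>{..<n}. s k = 2} = h"
  proof -
    have "{k\<in>{..<n}. s k = 2} = {h..<n}" unfolding s_def using n by auto
    then show ?thesis using n by simp
  qed
  have sv: "s k = (if k < h then 1 else 2)" if "k < n" for k using that unfolding s_def by auto
  have U: "unh {..<n} (complete_adj n) s i" if "i < n" for i
  proof (cases "i < h")
    case True
    then have "s i = 1" using sv that by auto
    then show ?thesis using cnt_complete[OF that, of s] c1 c2 n unfolding unh_def
      by simp
  next
    case False
    then have "s i = 2" using sv that by auto
    then show ?thesis using cnt_complete[OF that, of s] c1 c2 n unfolding unh_def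
      by simp
  qed
  have "s \<in> ST {..<n} (complete_adj n) (NE {..<n} (complete_adj n))"
  proof (rule ST_suff[OF complete_simple s], intro ballI impI)
    fix i assume i: "i \<in> {..<n}" "unh {..<n} (complete_adj n) s i"
    define j where "j = (if i < h then n - 1 else 0)"
    have j: "j < n" "j \<noteq> i" "s j \<noteq> s i" using n i sv[of i] sv[of j] unfolding j_def by auto
    have m: "cnt {..<n} (complete_adj n) s i (3 - s i) \<le> cnt {..<n} (complete_adj n) s i (s i) + 2"
      using cnt_complete[of i n s] c1 c2 i n sv[of i] by auto
    show "\<exists>j\<in>{..<n}. complete_adj n i j \<and> s j \<noteq> s i \<and> unh {..<n} (complete_adj n) s j \<and>
             cnt {..<n} (complete_adj n) s i (3 - s i) \<le> cnt {..<n} (complete_adj n) s i (s i) + 2"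
      using j m U[of j] i unfolding complete_adj_def by auto
  qed
  moreover have "s \<notin> NE {..<n} (complete_adj n)"
    using notNE[OF complete_simple _ U s, of 0] n by auto
  ultimately show ?thesis by auto
qed



definition nb1 :: "nat \<Rightarrow> nat \<Rightarrow> nat" where "nb1 n i = (if i + 1 = n then 0 else i + 1)"
definition nb2 :: "nat \<Rightarrow> nat \<Rightarrow> nat" where "nb2 n i = (if i = 0 then n - 1 else i - 1)"

lemma cyc_adj_iff:
  assumes "n \<ge> 3" "i < n"
  shows "cycle_adj n i j \<longleftrightarrow> j = nb1 n i \<or> j = nb2 n i"
proof -
  have a: "(i + 1) mod n = nb1 n i" using assms unfolding nb1_def
    by (auto simp: Suc_lessI)
  have b: "(j < n \<and> i = (j + 1) mod n) \<longleftrightarrow> j = nb2 n i"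
  proof
    assume h: "j < n \<and> i = (j + 1) mod n"
    show "j = nb2 n i"
    proof (cases "j + 1 = n")
      case True then show ?thesis using h unfolding nb2_def by auto
    next
      case False then have "j + 1 < n" using h by auto
      then show ?thesis using h unfolding nb2_def by auto
    qed
  next
    assume "j = nb2 n i"
    then show "j < n \<and> i = (j + 1) mod n" using assms unfolding nb2_def by auto
  qed
  show ?thesis unfolding cycle_adj_def using a b assms unfolding nb1_def by auto
qed

lemma nb_props:
  assumes "n \<ge> 3" "i < n"
  shows "nb1 n i < n" "nb2 n i < n" "nb1 n i \<noteq> nb2 n i" "nb1 n i \<noteq> i" "nb2 n i \<noteq> i"
  using assms unfolding nb1_def nb2_def by auto

lemma cycle_simple:
  assumes n: "n \<ge> 3" shows "simple_graph {..<n} (cycle_adj n)"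
proof -
  have irr: "\<not> cycle_adj n i i" for i
  proof
    assume h: "cycle_adj n i i"
    then have "i < n" unfolding cycle_adj_def by auto
    then show False using h cyc_adj_iff[OF n, of i i] nb_props[OF n, of i] by auto
  qed
  have "cycle_adj n i j \<Longrightarrow> cycle_adj n j i" for i j unfolding cycle_adj_def by auto
  then show ?thesis unfolding simple_graph_def using irr by (auto simp: cycle_adj_def)
qed

lemma card_two:
  assumes "a \<noteq> b"
  shows "card {j \<in> {a,b}. P j} = (if P a then 1 else 0) + (if P b then 1 else 0)"
proof (cases "P a"; cases "P b")
  assume "P a" "P b" then have "{j \<in> {a,b}. P j} = {a,b}" by auto
  then show ?thesis using assms \<open>P a\<close> \<open>P b\<close> by simp
next
  assume "P a" "\<not> P b" then have "{j \<in> {a,b}. P j} = {a}" by auto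
  then show ?thesis using \<open>P a\<close> \<open>\<not> P b\<close> by simp
next
  assume "\<not> P a" "P b" then have "{j \<in> {a,b}. P j} = {b}" by auto
  then show ?thesis using \<open>\<not> P a\<close> \<open>P b\<close> by simp
next
  assume "\<not> P a" "\<not> P b" then have "{j \<in> {a,b}. P j} = {}" by auto
  then show ?thesis using \<open>\<not> P a\<close> \<open>\<not> P b\<close> by simp
qed

lemma cnt_cycle:
  assumes "n \<ge> 3" "i < n"
  shows "cnt {..<n} (cycle_adj n) s i y =
     (if s (nb1 n i) = y then 1 else 0) + (if s (nb2 n i) = y then 1 else 0)"
proof -
  have "{j \<in> {..<n}. cycle_adj n i j \<and> s j = y} = {j \<in> {nb1 n i, nb2 n i}. s j = y}"
  proof (intro set_eqI iffI)
    fix j assume "j \<in> {j \<in> {..<n}. cycle_adj n i j \<and> s j = y}"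
    then show "j \<in> {j \<in> {nb1 n i, nb2 n i}. s j = y}" using cyc_adj_iff[OF assms, of j] by blast
  next
    fix j assume "j \<in> {j \<in> {nb1 n i, nb2 n i}. s j = y}"
    then show "j \<in> {j \<in> {..<n}. cycle_adj n i j \<and> s j = y}"
      using cyc_adj_iff[OF assms, of j] nb_props(1,2)[OF assms] by blast
  qed
  moreover have "card {j \<in> {nb1 n i, nb2 n i}. s j = y} =
     (if s (nb1 n i) = y then 1 else 0) + (if s (nb2 n i) = y then 1 else 0)"
    using card_two[OF nb_props(3)[OF assms], of "\<lambda>j. s j = y"] by simp
  ultimately show ?thesis unfolding cnt_def by simp
qed

lemma unh_cycle:
  assumes "n \<ge> 3" "i < n" "s \<in> profiles {..<n}"
  shows "unh {..<n} (cycle_adj n) s i \<longleftrightarrow> s (nb1 n i) \<noteq> s i \<and> s (nb2 n i) \<noteq> s i"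
proof -
  have v: "s i \<in> {1,2}" "s (nb1 n i) \<in> {1,2}" "s (nb2 n i) \<in> {1,2}"
    using prof_val[OF assms(3)] nb_props[OF assms(1,2)] assms(2) by auto
  show ?thesis unfolding unh_def cnt_cycle[OF assms(1,2)] using v by auto
qed



lemma cycle_main:
  assumes n: "n \<ge> 4"
  defines "s \<equiv> ((\<lambda>k. if k < n then (if even k \<and> k + 1 < n then 1 else 2) else undefined) :: nat \<Rightarrow> nat)"
  shows "s \<in> ST {..<n} (cycle_adj n) (NE {..<n} (cycle_adj n)) - NE {..<n} (cycle_adj n)"
    and "even n \<Longrightarrow> (\<forall>i<n. unh {..<n} (cycle_adj n) s i \<and> s (nb1 n i) \<noteq> s i \<and> s (nb2 n i) \<noteq> s i)"
proof -
  have n3: "n \<ge> 3" using n by auto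
  have s: "s \<in> profiles {..<n}" unfolding profiles_def PiE_def extensional_def s_def by auto
  have sv: "s k = (if even k \<and> k + 1 < n then 1 else 2)" if "k < n" for k
    using that unfolding s_def by auto
  define Z where "Z i \<longleftrightarrow> even n \<or> i + 2 < n" for i
  have A: "s (nb1 n i) \<noteq> s i \<and> s (nb2 n i) \<noteq> s i" if "i < n" "Z i" for i
  proof -
    have "s (nb1 n i) \<noteq> s i"
      using that n sv[of i] sv[of "nb1 n i"] nb_props[OF n3 that(1)] unfolding nb1_def Z_def
      by (auto split: if_splits) presburger+
    moreover have "s (nb2 n i) \<noteq> s i"
      using that n sv[of i] sv[of "nb2 n i"] nb_props[OF n3 that(1)] unfolding nb2_def Z_def
      by (auto split: if_splits) presburger+
    ultimately show ?thesis by auto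
  qed
  have B: "\<not> unh {..<n} (cycle_adj n) s i" if "i < n" "\<not> Z i" for i
  proof -
    have "i = n - 1 \<or> i = n - 2" "odd n" using that unfolding Z_def by auto
    then have "s (nb1 n i) = s i \<or> s (nb2 n i) = s i"
      using that n sv[of i] sv[of "nb1 n i"] sv[of "nb2 n i"] nb_props[OF n3 that(1)] unfolding nb1_def nb2_def
      by (auto split: if_splits)
    then show ?thesis using unh_cycle[OF n3 that(1) s] by auto
  qed
  have U: "unh {..<n} (cycle_adj n) s i \<longleftrightarrow> Z i" if "i < n" for i
    using A[OF that] B[OF that] unh_cycle[OF n3 that s] by auto
  have "s \<in> ST {..<n} (cycle_adj n) (NE {..<n} (cycle_adj n))"
  proof (rule ST_suff[OF cycle_simple[OF n3] s], intro ballI impI)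
    fix i assume i: "i \<in> {..<n}" "unh {..<n} (cycle_adj n) s i"
    then have Zi: "Z i" and il: "i < n" using U by auto
    define j where "j = (if i = 0 then nb1 n i else nb2 n i)"
    have adj: "cycle_adj n i j" using cyc_adj_iff[OF n3 il] unfolding j_def by auto
    have jl: "j < n" using nb_props[OF n3 il] unfolding j_def by auto
    have ne: "s j \<noteq> s i" using A[OF il Zi] unfolding j_def by auto
    have Zj: "Z j" using Zi n il unfolding j_def Z_def nb1_def nb2_def by auto
    have m: "cnt {..<n} (cycle_adj n) s i (3 - s i) \<le> cnt {..<n} (cycle_adj n) s i (s i) + 2"
      unfolding cnt_cycle[OF n3 il] by auto
    show "\<exists>j\<in>{..<n}. cycle_adj n i j \<and> s j \<noteq> s i \<and> unh {..<n} (cycle_adj n) s j \<and>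
             cnt {..<n} (cycle_adj n) s i (3 - s i) \<le> cnt {..<n} (cycle_adj n) s i (s i) + 2"
      using adj jl ne Zj U[OF jl] m by auto
  qed
  moreover have "s \<notin> NE {..<n} (cycle_adj n)"
    using notNE[OF cycle_simple[OF n3] _ _ s, of 0] U[of 0] n unfolding Z_def by auto
  ultimately show "s \<in> ST {..<n} (cycle_adj n) (NE {..<n} (cycle_adj n)) - NE {..<n} (cycle_adj n)"
    by auto
  show "even n \<Longrightarrow> (\<forall>i<n. unh {..<n} (cycle_adj n) s i \<and> s (nb1 n i) \<noteq> s i \<and> s (nb2 n i) \<noteq> s i)"
    using A U unfolding Z_def by auto
qed



lemma cycle_edges:
  assumes n3: "n \<ge> 3"
  shows "card (edges {..<n} (cycle_adj n)) = n"
proof -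
  have eq: "edges {..<n} (cycle_adj n) = (\<lambda>i. {i, nb1 n i}) ` {..<n}"
  proof (intro set_eqI iffI)
    fix e assume "e \<in> edges {..<n} (cycle_adj n)"
    then obtain i j where e: "e = {i, j}" "i < n" "j < n" "cycle_adj n i j"
      unfolding edges_def by auto
    then have "j = nb1 n i \<or> j = nb2 n i" using cyc_adj_iff[OF n3] by auto
    moreover have "j = nb2 n i \<Longrightarrow> i = nb1 n j" using e(2,3) n3 unfolding nb1_def nb2_def
      by (auto split: if_splits)
    ultimately consider "j = nb1 n i" | "i = nb1 n j" by blast
    then show "e \<in> (\<lambda>i. {i, nb1 n i}) ` {..<n}"
    proof cases
      case 1 then show ?thesis using e by blast
    next
      case 2 then have "e = {j, nb1 n j}" using e by auto
      then show ?thesis using e by blast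
    qed
  next
    fix e assume "e \<in> (\<lambda>i. {i, nb1 n i}) ` {..<n}"
    then obtain i where i: "i < n" "e = {i, nb1 n i}" by auto
    then show "e \<in> edges {..<n} (cycle_adj n)"
      unfolding edges_def using cyc_adj_iff[OF n3 i(1), of "nb1 n i"] nb_props[OF n3 i(1)] by auto
  qed
  have inj: "inj_on (\<lambda>i. {i, nb1 n i}) {..<n}"
  proof (rule inj_onI)
    fix i k assume h: "i \<in> {..<n}" "k \<in> {..<n}" "{i, nb1 n i} = {k, nb1 n k}"
    show "i = k"
    proof (rule ccontr)
      assume "i \<noteq> k"
      then have "i = nb1 n k" "k = nb1 n i" using h(3) by (auto simp: doubleton_eq_iff)
      then have kk: "nb1 n (nb1 n k) = k" by simp
      have "k < n" using h by auto
      then show False using kk n3 unfolding nb1_def by (cases "k + 1 = n"; cases "k + 2 = n") auto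
    qed
  qed
  show ?thesis unfolding eq using card_image[OF inj] by simp
qed

lemma cycle_sw:
  assumes n: "n \<ge> 3" and h: "\<forall>i<n. s (nb1 n i) \<noteq> s i \<and> s (nb2 n i) \<noteq> s i"
  shows "sw {..<n} (cycle_adj n) s = 0"
proof -
  have "util {..<n} (cycle_adj n) i s = 0" if "i < n" for i
    using cnt_cycle[OF n that, of s "s i"] h that unfolding util_def cnt_def by auto
  then show ?thesis unfolding sw_def by simp
qed

lemma part1:
  "\<forall>n::nat. n \<ge> 4 \<longrightarrow>
            ST {..<n} (cycle_adj n) (NE {..<n} (cycle_adj n)) - NE {..<n} (cycle_adj n) \<noteq> {}
          \<and> (even n \<longrightarrow> (\<exists>s \<in> ST {..<n} (cycle_adj n) (NE {..<n} (cycle_adj n)) - NE {..<n} (cycle_adj n).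
                int (sw {..<n} (cycle_adj n) s)
                  = int (card (edges {..<n} (cycle_adj n))) - int (card {..<n})))"
proof (intro allI impI conjI)
  fix n :: nat assume n: "n \<ge> 4"
  then have n3: "n \<ge> 3" by auto
  note cm = cycle_main[OF n]
  show "ST {..<n} (cycle_adj n) (NE {..<n} (cycle_adj n)) - NE {..<n} (cycle_adj n) \<noteq> {}"
    using cm(1) by blast
  assume e: "even n"
  define s0 where "s0 = ((\<lambda>k. if k < n then (if even k \<and> k + 1 < n then 1 else 2) else undefined) :: nat \<Rightarrow> nat)"
  have m1: "s0 \<in> ST {..<n} (cycle_adj n) (NE {..<n} (cycle_adj n)) - NE {..<n} (cycle_adj n)"
    using cm(1) unfolding s0_def .
  have m2: "\<forall>i<n. s0 (nb1 n i) \<noteq> s0 i \<and> s0 (nb2 n i) \<noteq> s0 i"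
    using cm(2)[OF e] unfolding s0_def by blast
  have "sw {..<n} (cycle_adj n) s0 = 0" using cycle_sw[OF n3 m2] .
  then show "\<exists>s \<in> ST {..<n} (cycle_adj n) (NE {..<n} (cycle_adj n)) - NE {..<n} (cycle_adj n).
                int (sw {..<n} (cycle_adj n) s)
                  = int (card (edges {..<n} (cycle_adj n))) - int (card {..<n})"
    using m1 cycle_edges[OF n3] by (intro bexI[of _ s0]) auto
qed



definition is_path :: "'a set \<Rightarrow> ('a \<Rightarrow> 'a \<Rightarrow> bool) \<Rightarrow> 'a list \<Rightarrow> bool" where
  "is_path V E P \<longleftrightarrow> distinct P \<and> set P \<subseteq> V \<and> (\<forall>k. k + 1 < length P \<longrightarrow> E (P ! k) (P ! (k + 1)))"

lemma path_cycle:
  assumes p: "is_path V E P" and ab: "a + 2 \<le> b" "b < length P" and e: "E (P ! b) (P ! a)"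
  shows "has_cycle V E"
proof -
  define vs where "vs = map (\<lambda>k. P ! (a + k)) [0..<b - a + 1]"
  have len: "length vs = b - a + 1" unfolding vs_def by simp
  have d: "distinct vs" unfolding vs_def distinct_map
  proof
    show "distinct [0..<b - a + 1]" by simp
    show "inj_on (\<lambda>k. P ! (a + k)) (set [0..<b - a + 1])"
    proof (rule inj_onI)
      fix k k' assume "k \<in> set [0..<b - a + 1]" "k' \<in> set [0..<b - a + 1]" "P ! (a + k) = P ! (a + k')"
      then have "a + k < length P" "a + k' < length P" "P ! (a + k) = P ! (a + k')" using ab by auto
      then have "a + k = a + k'" using p nth_eq_iff_index_eq[of P "a + k" "a + k'"] unfolding is_path_def by auto
      then show "k = k'" by simp
    qed
  qed
  have sv: "set vs \<subseteq> V" unfolding vs_def using p ab unfolding is_path_def by auto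
  have adj: "\<forall>k < length vs. E (vs ! k) (vs ! ((k + 1) mod length vs))"
  proof (intro allI impI)
    fix k assume k: "k < length vs"
    show "E (vs ! k) (vs ! ((k + 1) mod length vs))"
    proof (cases "k + 1 < length vs")
      case True
      then have "vs ! k = P ! (a + k)" "vs ! ((k + 1) mod length vs) = P ! (a + k + 1)"
        using len unfolding vs_def by (auto simp del: upt_Suc)
      then show ?thesis using p True len ab unfolding is_path_def by auto
    next
      case False
      then have "k = b - a" using k len by auto
      then have "vs ! k = P ! b" "vs ! ((k + 1) mod length vs) = P ! a"
        using len ab unfolding vs_def by (auto simp del: upt_Suc)
      then show ?thesis using e by simp
    qed
  qed
  have l3: "length vs \<ge> 3" using len ab by simp
  show ?thesis unfolding has_cycle_def using l3 d sv adj by blast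
qed

lemma head_leaf:
  assumes g: "simple_graph V E" and nc: "\<not> has_cycle V E"
    and p: "is_path V E P" and l: "length P \<ge> 2"
    and mx: "\<forall>Q. is_path V E Q \<longrightarrow> length Q \<le> length P"
    and e: "E (P ! 0) y"
  shows "y = P ! 1"
proof (cases "y \<in> set P")
  case False
  have yV: "y \<in> V" using g e unfolding simple_graph_def by blast
  have "is_path V E (y # P)"
    unfolding is_path_def
  proof (intro conjI allI impI)
    show "distinct (y # P)" using False p unfolding is_path_def by auto
    show "set (y # P) \<subseteq> V" using yV p unfolding is_path_def by auto
    fix k assume k: "k + 1 < length (y # P)"
    show "E ((y # P) ! k) ((y # P) ! (k + 1))"
    proof (cases k)
      case 0 then show ?thesis using e g unfolding simple_graph_def by auto
    next
      case (Suc k') then show ?thesis using p k unfolding is_path_def by auto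
    qed
  qed
  then show ?thesis using mx by fastforce
next
  case True
  then obtain m where m: "m < length P" "y = P ! m" by (auto simp: in_set_conv_nth)
  have "m \<noteq> 0"
  proof
    assume "m = 0" then show False using e m g unfolding simple_graph_def by auto
  qed
  moreover have "\<not> m \<ge> 2"
  proof
    assume "m \<ge> 2"
    then have "has_cycle V E" using path_cycle[OF p, of 0 m] m e g unfolding simple_graph_def by auto
    then show False using nc by simp
  qed
  ultimately have "m = 1" by linarith
  then show ?thesis using m by simp
qed

lemma forest_center:
  assumes f: "forest V E" and e: "E i j"
  shows "\<exists>x l r. x \<in> V \<and> E x l \<and> (\<forall>z. E l z \<longrightarrow> z = x) \<and> (\<forall>w. E x w \<longrightarrow> w = r \<or> (\<forall>z. E w z \<longrightarrow> z = x))"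
proof -
  have g: "simple_graph V E" and nc: "\<not> has_cycle V E" using f unfolding forest_def by auto
  have fin: "finite V" and sym: "\<And>a b. E a b \<Longrightarrow> E b a" and irr: "\<And>a. \<not> E a a"
    and inV: "\<And>a b. E a b \<Longrightarrow> a \<in> V \<and> b \<in> V"
    using g unfolding simple_graph_def by auto
  have ij: "is_path V E [i, j]" unfolding is_path_def
  proof (intro conjI allI impI)
    show "distinct [i, j]" using e irr by auto
    show "set [i, j] \<subseteq> V" using inV[OF e] by auto
    fix k assume "k + 1 < length [i, j]"
    then have "k = 0" by simp
    then show "E ([i, j] ! k) ([i, j] ! (k + 1))" using e by simp
  qed
  have bnd: "\<forall>Q. is_path V E Q \<and> length Q \<ge> 2 \<longrightarrow> length Q < card V + 1"
  proof (intro allI impI)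
    fix Q assume "is_path V E Q \<and> length Q \<ge> 2"
    then have "distinct Q" "set Q \<subseteq> V" unfolding is_path_def by auto
    then have "length Q = card (set Q)" "card (set Q) \<le> card V"
      using card_mono[OF fin, of "set Q"] distinct_card[of Q] by auto
    then show "length Q < card V + 1" by linarith
  qed
  obtain P where P: "is_path V E P" "length P \<ge> 2"
    and mx0: "\<forall>Q. is_path V E Q \<and> length Q \<ge> 2 \<longrightarrow> length Q \<le> length P"
    using Lattices_Big.ex_has_greatest_nat[of "\<lambda>Q. is_path V E Q \<and> length Q \<ge> 2" "[i,j]" length "card V + 1"]
      ij bnd by auto
  have mx: "\<forall>Q. is_path V E Q \<longrightarrow> length Q \<le> length P"
    using mx0 P(2) by (metis le_trans nat_le_linear)
  define x where "x = P ! 1"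
  have xV: "x \<in> V" using P unfolding is_path_def x_def by auto
  have "E (P ! 0) (P ! 1)" using P unfolding is_path_def by auto
  then have l: "E x (P ! 0)" unfolding x_def by (rule sym)
  have leaf0: "\<forall>z. E (P ! 0) z \<longrightarrow> z = x" using head_leaf[OF g nc P mx] unfolding x_def by auto
  have "\<forall>w. E x w \<longrightarrow> w = P ! 2 \<or> (\<forall>z. E w z \<longrightarrow> z = x)"
  proof (intro allI impI)
    fix w assume xw: "E x w"
    show "w = P ! 2 \<or> (\<forall>z. E w z \<longrightarrow> z = x)"
    proof (cases "w \<in> set P")
      case True
      then obtain m where m: "m < length P" "w = P ! m" by (auto simp: in_set_conv_nth)
      have "m \<noteq> 1" using xw m irr unfolding x_def by auto
      moreover have "\<not> m \<ge> 3"
      proof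
        assume "m \<ge> 3"
        moreover have "E (P ! m) (P ! 1)" using sym[OF xw] m unfolding x_def by simp
        ultimately have "has_cycle V E" using path_cycle[OF P(1), of 1 m] m by auto
        then show False using nc by simp
      qed
      ultimately have "m = 0 \<or> m = 2" by auto
      then show ?thesis using m leaf0 by auto
    next
      case False
      define Q where "Q = w # tl P"
      have lq: "length Q = length P" unfolding Q_def using P by auto
      have qn: "Q ! k = P ! k" if "k \<ge> 1" "k < length P" for k
        using that P unfolding Q_def by (cases k) (auto simp: nth_tl)
      have "is_path V E Q" unfolding is_path_def
      proof (intro conjI allI impI)
        have st: "set (tl P) \<subseteq> set P" by (cases P) auto
        show "distinct Q" using False P st unfolding Q_def is_path_def by (auto simp: distinct_tl)
        show "set Q \<subseteq> V" using inV[OF xw] P st unfolding Q_def is_path_def by auto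
        fix k assume k: "k + 1 < length Q"
        show "E (Q ! k) (Q ! (k + 1))"
        proof (cases k)
          case 0 then show ?thesis using qn[of 1] P sym[OF xw] unfolding x_def Q_def by auto
        next
          case (Suc k') then show ?thesis using qn[of k] qn[of "k+1"] k lq P unfolding is_path_def by auto
        qed
      qed
      moreover have "Q ! 0 = w" "Q ! 1 = x" using qn[of 1] P unfolding Q_def x_def by auto
      ultimately have "\<forall>z. E w z \<longrightarrow> z = x" using head_leaf[OF g nc _ _ _] lq P mx by metis
      then show ?thesis by auto
    qed
  qed
  then show ?thesis using xV l leaf0 by blast
qed



lemma forest_part:
  assumes f: "forest V E" and e: "E i0 j0"
  shows "ST V E (NE V E) - NE V E \<noteq> {}"
proof -
  have g: "simple_graph V E" using f unfolding forest_def by auto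
  have fin: "finite V" and sym: "\<And>a b. E a b \<Longrightarrow> E b a" and irr: "\<And>a. \<not> E a a"
    and inV: "\<And>a b. E a b \<Longrightarrow> a \<in> V \<and> b \<in> V"
    using g unfolding simple_graph_def by auto
  obtain x l r where x: "x \<in> V" "E x l" "\<forall>z. E l z \<longrightarrow> z = x"
    and xr: "\<forall>w. E x w \<longrightarrow> w = r \<or> (\<forall>z. E w z \<longrightarrow> z = x)"
    using forest_center[OF f e] by blast
  define L where "L = {w \<in> V. E x w \<and> (\<forall>z. E w z \<longrightarrow> z = x)}"
  define R where "R = {w \<in> V. E x w \<and> \<not> (\<forall>z. E w z \<longrightarrow> z = x)}"
  have finL: "finite L" "finite R" using fin unfolding L_def R_def by auto
  have lL: "l \<in> L" using x inV[OF x(2)] unfolding L_def by auto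
  have m1: "card L \<ge> 1" using lL finL card_gt_0_iff[of L] by auto
  have Rr: "R \<subseteq> {r}" using xr unfolding R_def by auto
  have r1: "card R \<le> 1" using card_mono[OF _ Rr] by auto
  have xL: "x \<notin> L" using irr unfolding L_def by auto
  define m where "m = card L"
  define r0 where "r0 = card R"
  define p where "p = (m - r0) div 2 + 1"
  have pm: "p \<le> m" "p \<ge> 1" "m - p < p + r0" "p + r0 \<le> m - p + 2"
    using m1 r1 unfolding p_def m_def r0_def by presburger+
  obtain P where P: "P \<subseteq> L" "card P = p" "finite P"
    using obtain_subset_with_card_n[of p L] pm unfolding m_def by auto
  have Pne: "P \<noteq> {}" using P pm by auto
  define s where "s = ((\<lambda>w. if w \<in> V then (if w = x \<or> w \<in> L - P then 1 else 2) else undefined) :: 'a \<Rightarrow> nat)"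
  have s: "s \<in> profiles V" unfolding profiles_def PiE_def extensional_def s_def by auto
  have sx: "s x = 1" using x unfolding s_def by auto
  have sP: "s w = 2" if "w \<in> P" for w using that P xL unfolding s_def L_def by auto
  have sLP: "s w = 1" if "w \<in> L - P" for w using that unfolding s_def L_def by auto
  have sO: "s w = 2" if "w \<in> V" "w \<noteq> x" "w \<notin> L" for w using that unfolding s_def by auto
  have cx1: "cnt V E s x 1 = m - p"
  proof -
    have "{j \<in> V. E x j \<and> s j = 1} = L - P"
    proof (intro set_eqI iffI)
      fix j assume j: "j \<in> {j \<in> V. E x j \<and> s j = 1}"
      then have "j \<noteq> x" using irr by auto
      then show "j \<in> L - P" using j unfolding s_def by (auto split: if_splits)
    next
      fix j assume "j \<in> L - P" then show "j \<in> {j \<in> V. E x j \<and> s j = 1}"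
        using sLP unfolding L_def by auto
    qed
    then show ?thesis unfolding cnt_def m_def using P card_Diff_subset[OF P(3) P(1)] by simp
  qed
  have cx2: "cnt V E s x 2 = p + r0"
  proof -
    have "{j \<in> V. E x j \<and> s j = 2} = P \<union> R"
    proof (intro set_eqI iffI)
      fix j assume j: "j \<in> {j \<in> V. E x j \<and> s j = 2}"
      then have "j \<noteq> x" using irr by auto
      then show "j \<in> P \<union> R" using j unfolding s_def L_def R_def by (auto split: if_splits)
    next
      fix j assume j: "j \<in> P \<union> R"
      show "j \<in> {j \<in> V. E x j \<and> s j = 2}"
      proof (cases "j \<in> P")
        case True then show ?thesis using sP P(1) unfolding L_def by auto
      next
        case False
        then have "j \<in> R" using j by auto
        then have "j \<in> V" "E x j" "j \<noteq> x" "j \<notin> L" using irr unfolding R_def L_def by auto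
        then show ?thesis using sO by auto
      qed
    qed
    moreover have "P \<inter> R = {}" using P(1) unfolding L_def R_def by auto
    ultimately show ?thesis unfolding cnt_def r0_def using P finL card_Un_disjoint[of P R] by simp
  qed
  have ux: "unh V E s x" unfolding unh_def using sx cx1 cx2 pm by simp
  have mx: "cnt V E s x (3 - s x) \<le> cnt V E s x (s x) + 2" using sx cx1 cx2 pm by simp
  have nbleaf: "{j \<in> V. E w j \<and> s j = y} = (if s x = y then {x} else {})" if "w \<in> L" for w y
    using that x(1) unfolding L_def by (auto intro: sym)
  have uP: "unh V E s w" if "w \<in> P" for w
  proof -
    have "w \<in> L" using that P by auto
    then show ?thesis unfolding unh_def cnt_def nbleaf[OF \<open>w \<in> L\<close>] using sP[OF that] sx by simp
  qed
  have mP: "cnt V E s w (3 - s w) \<le> cnt V E s w (s w) + 2" if "w \<in> P" for w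
  proof -
    have "w \<in> L" using that P by auto
    then show ?thesis unfolding cnt_def nbleaf[OF \<open>w \<in> L\<close>] by simp
  qed
  have hLP: "\<not> unh V E s w" if "w \<in> L - P" for w
  proof -
    have "w \<in> L" using that by auto
    then show ?thesis unfolding unh_def cnt_def nbleaf[OF \<open>w \<in> L\<close>] using sLP[OF that] sx by simp
  qed
  have hO: "\<not> unh V E s w" if w: "w \<in> V" "w \<noteq> x" "w \<notin> L" for w
  proof -
    have sub: "{j \<in> V. E w j \<and> s j = 1} \<subseteq> {x}"
    proof
      fix j assume j: "j \<in> {j \<in> V. E w j \<and> s j = 1}"
      show "j \<in> {x}"
      proof (rule ccontr)
        assume "j \<notin> {x}"
        then have "j \<in> L" using j unfolding s_def by (auto split: if_splits)
        then have "w = x" using j sym unfolding L_def by blast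
        then show False using w by simp
      qed
    qed
    have c1: "cnt V E s w 1 \<le> 1" unfolding cnt_def using card_mono[OF _ sub] by simp
    have "cnt V E s w 1 \<le> cnt V E s w 2"
    proof (cases "E w x")
      case True
      then have "w \<in> R" using w sym unfolding L_def R_def by auto
      then obtain z where z: "E w z" "z \<noteq> x" unfolding R_def by auto
      have zV: "z \<in> V" using inV[OF z(1)] by auto
      have "z \<notin> L"
      proof
        assume "z \<in> L" then have "w = x" using sym[OF z(1)] unfolding L_def by blast
        then show False using w by simp
      qed
      then have "s z = 2" using sO zV z by auto
      then have "z \<in> {j \<in> V. E w j \<and> s j = 2}" using z zV by auto
      then have "cnt V E s w 2 \<ge> 1" unfolding cnt_def using fin card_gt_0_iff
        by (metis (no_types, lifting) One_nat_def Suc_leI empty_iff finite_subset mem_Collect_eq subsetI)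
      then show ?thesis using c1 by simp
    next
      case False
      then have "{j \<in> V. E w j \<and> s j = 1} = {}" using sub by auto
      then have "cnt V E s w 1 = 0" unfolding cnt_def by (simp only: card.empty)
      then show ?thesis by simp
    qed
    then show ?thesis unfolding unh_def using sO[OF w] by simp
  qed
  have "s \<in> ST V E (NE V E)"
  proof (rule ST_suff[OF g s], intro ballI impI)
    fix i assume i: "i \<in> V" "unh V E s i"
    have "i = x \<or> i \<in> P" using hLP hO i by blast
    then show "\<exists>j\<in>V. E i j \<and> s j \<noteq> s i \<and> unh V E s j \<and>
             cnt V E s i (3 - s i) \<le> cnt V E s i (s i) + 2"
    proof
      assume ix: "i = x"
      obtain q where q: "q \<in> P" using Pne by auto
      have "q \<in> L" using q P by auto
      then have "q \<in> V" "E x q" unfolding L_def by auto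
      then show ?thesis using ix q sP[OF q] sx uP[OF q] mx by auto
    next
      assume iP: "i \<in> P"
      then have "i \<in> L" using P by auto
      then have "E i x" using sym unfolding L_def by auto
      then show ?thesis using x(1) sx sP[OF iP] ux mP[OF iP] by auto
    qed
  qed
  moreover have "s \<notin> NE V E" using notNE[OF g x(1) ux s] .
  ultimately show ?thesis by auto
qed


theorem theorem5:
  shows "(\<forall>n::nat. n \<ge> 4 \<longrightarrow>
            ST {..<n} (cycle_adj n) (NE {..<n} (cycle_adj n)) - NE {..<n} (cycle_adj n) \<noteq> {}
          \<and> (even n \<longrightarrow> (\<exists>s \<in> ST {..<n} (cycle_adj n) (NE {..<n} (cycle_adj n)) - NE {..<n} (cycle_adj n).
                int (sw {..<n} (cycle_adj n) s)
                  = int (card (edges {..<n} (cycle_adj n))) - int (card {..<n})))) \<and>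
         (\<forall>n::nat. n \<ge> 1 \<longrightarrow>
            (ST {..<n} (complete_adj n) (NE {..<n} (complete_adj n)) - NE {..<n} (complete_adj n) \<noteq> {}
             \<longleftrightarrow> even n)) \<and>
         (\<forall>(V :: 'a set) E. forest V E \<and> (\<exists>i j. E i j) \<longrightarrow>
            ST V E (NE V E) - NE V E \<noteq> {})"
proof (intro conjI)
  show "\<forall>n::nat. n \<ge> 4 \<longrightarrow>
            ST {..<n} (cycle_adj n) (NE {..<n} (cycle_adj n)) - NE {..<n} (cycle_adj n) \<noteq> {}
          \<and> (even n \<longrightarrow> (\<exists>s \<in> ST {..<n} (cycle_adj n) (NE {..<n} (cycle_adj n)) - NE {..<n} (cycle_adj n).
                int (sw {..<n} (cycle_adj n) s)
                  = int (card (edges {..<n} (cycle_adj n))) - int (card {..<n})))"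
    by (rule part1)
  show "\<forall>n::nat. n \<ge> 1 \<longrightarrow>
            (ST {..<n} (complete_adj n) (NE {..<n} (complete_adj n)) - NE {..<n} (complete_adj n) \<noteq> {}
             \<longleftrightarrow> even n)"
  proof (intro allI impI iffI)
    fix n :: nat assume "n \<ge> 1" "even n"
    then show "ST {..<n} (complete_adj n) (NE {..<n} (complete_adj n)) - NE {..<n} (complete_adj n) \<noteq> {}"
      using complete_even[of n] by blast
  next
    fix n :: nat
    assume "ST {..<n} (complete_adj n) (NE {..<n} (complete_adj n)) - NE {..<n} (complete_adj n) \<noteq> {}"
    then obtain s where "s \<in> ST {..<n} (complete_adj n) (NE {..<n} (complete_adj n))"
      "s \<notin> NE {..<n} (complete_adj n)" by auto
    then show "even n" using complete_odd[of n s] by blast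
  qed
  show "\<forall>(V :: 'a set) E. forest V E \<and> (\<exists>i j. E i j) \<longrightarrow> ST V E (NE V E) - NE V E \<noteq> {}"
  proof (intro allI impI)
    fix V :: "'a set" and E assume h: "forest V E \<and> (\<exists>i j. E i j)"
    then obtain i j where "E i j" by blast
    then show "ST V E (NE V E) - NE V E \<noteq> {}" using forest_part[of V E i j] h by blast
  qed
qed

end
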